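(* Let $\alpha_1\ge\alpha_2\ge\cdots\ge\alpha_{14}\ge0$ be real numbers with $\alpha_1+\cdots+\alpha_{14}=1$ and $\alpha_1+\alpha_2<\frac12$, and suppose that no sub-sum $\sum_{i\in\mathcal{S}}\alpha_i$, for $\mathcal{S}\subseteq\{1,\dots,14\}$, lies in $[\frac{5}{12},\frac{7}{12}]$. Then $\alpha_5>\frac16$ and \[ \alpha_1+\alpha_2+\alpha_6+\alpha_7+\cdots+\alpha_{14}<\frac{5}{12}. \] *)

theory Defs
  imports Main "HOL.Real"
begin

end

theory Submission
  imports Defs
begin

theorem lemma12:
  fixes a :: "nat \<Rightarrow> real"
  assumes mono: "\<And>i j. 1 \<le> i \<Longrightarrow> i \<le> j \<Longrightarrow> j \<le> 14 \<Longrightarrow> a j \<le> a i"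
    and nonneg: "a 14 \<ge> 0"
    and sum1: "(\<Sum>i=1..14. a i) = 1"
    and top2: "a 1 + a 2 < 1/2"
    and nosub: "\<And>S. S \<subseteq> {1..14} \<Longrightarrow> \<not> (5/12 \<le> (\<Sum>i\<in>S. a i) \<and> (\<Sum>i\<in>S. a i) \<le> 7/12)"
  shows "a 5 > 1/6 \<and> a 1 + a 2 + (\<Sum>i=6..14. a i) < 5/12"
proof -
  have S: "a 1 + a 2 + a 3 + a 4 + a 5 + a 6 + a 7 + a 8 + a 9 + a 10 + a 11 + a 12 + a 13 + a 14 = 1"
    using sum1 by (simp add: sum.atLeast_Suc_atMost numeral_eq_Suc)
  have m: "a 2 \<le> a 1" "a 3 \<le> a 2" "a 4 \<le> a 3" "a 5 \<le> a 4" "a 6 \<le> a 5" "a 7 \<le> a 6"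
    "a 8 \<le> a 7" "a 9 \<le> a 8" "a 10 \<le> a 9" "a 11 \<le> a 10" "a 12 \<le> a 11" "a 13 \<le> a 12"
    "a 14 \<le> a 13" by (rule mono; simp)+
  have n: "\<And>S. S \<subseteq> {1..14} \<Longrightarrow> (\<Sum>i\<in>S. a i) < 5/12 \<or> (\<Sum>i\<in>S. a i) > 7/12"
    using nosub by (meson not_le)
  have c0: "a 1 + a 2 < 5/12 \<or> a 1 + a 2 > 7/12" using n[of "{1,2}"] by (simp add: add.assoc)
  have c0': "a 1 + a 2 < 5/12" using c0 top2 by linarith
  have a5: "a 5 > 1/6"
  proof (rule ccontr)
    assume h: "\<not> a 5 > 1/6"
    have d5: "a 1 + a 2 + a 5 < 5/12 \<or> a 1 + a 2 + a 5 > 7/12" using n[of "{1,2,5}"] by (simp add: add.assoc)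
    have c5: "a 1 + a 2 + a 5 < 5/12" using d5 c0' h m by linarith
    have d6: "a 1 + a 2 + a 5 + a 6 < 5/12 \<or> a 1 + a 2 + a 5 + a 6 > 7/12" using n[of "{1,2,5,6}"] by (simp add: add.assoc)
    have c6: "a 1 + a 2 + a 5 + a 6 < 5/12" using d6 c5 h m by linarith
    have d7: "a 1 + a 2 + a 5 + a 6 + a 7 < 5/12 \<or> a 1 + a 2 + a 5 + a 6 + a 7 > 7/12" using n[of "{1,2,5,6,7}"] by (simp add: add.assoc)
    have c7: "a 1 + a 2 + a 5 + a 6 + a 7 < 5/12" using d7 c6 h m by linarith
    have d8: "a 1 + a 2 + a 5 + a 6 + a 7 + a 8 < 5/12 \<or> a 1 + a 2 + a 5 + a 6 + a 7 + a 8 > 7/12" using n[of "{1,2,5,6,7,8}"] by (simp add: add.assoc)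
    have c8: "a 1 + a 2 + a 5 + a 6 + a 7 + a 8 < 5/12" using d8 c7 h m by linarith
    have d9: "a 1 + a 2 + a 5 + a 6 + a 7 + a 8 + a 9 < 5/12 \<or> a 1 + a 2 + a 5 + a 6 + a 7 + a 8 + a 9 > 7/12" using n[of "{1,2,5,6,7,8,9}"] by (simp add: add.assoc)
    have c9: "a 1 + a 2 + a 5 + a 6 + a 7 + a 8 + a 9 < 5/12" using d9 c8 h m by linarith
    have d10: "a 1 + a 2 + a 5 + a 6 + a 7 + a 8 + a 9 + a 10 < 5/12 \<or> a 1 + a 2 + a 5 + a 6 + a 7 + a 8 + a 9 + a 10 > 7/12" using n[of "{1,2,5,6,7,8,9,10}"] by (simp add: add.assoc)
    have c10: "a 1 + a 2 + a 5 + a 6 + a 7 + a 8 + a 9 + a 10 < 5/12" using d10 c9 h m by linarith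
    have d11: "a 1 + a 2 + a 5 + a 6 + a 7 + a 8 + a 9 + a 10 + a 11 < 5/12 \<or> a 1 + a 2 + a 5 + a 6 + a 7 + a 8 + a 9 + a 10 + a 11 > 7/12" using n[of "{1,2,5,6,7,8,9,10,11}"] by (simp add: add.assoc)
    have c11: "a 1 + a 2 + a 5 + a 6 + a 7 + a 8 + a 9 + a 10 + a 11 < 5/12" using d11 c10 h m by linarith
    have d12: "a 1 + a 2 + a 5 + a 6 + a 7 + a 8 + a 9 + a 10 + a 11 + a 12 < 5/12 \<or> a 1 + a 2 + a 5 + a 6 + a 7 + a 8 + a 9 + a 10 + a 11 + a 12 > 7/12" using n[of "{1,2,5,6,7,8,9,10,11,12}"] by (simp add: add.assoc)
    have c12: "a 1 + a 2 + a 5 + a 6 + a 7 + a 8 + a 9 + a 10 + a 11 + a 12 < 5/12" using d12 c11 h m by linarith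
    have d13: "a 1 + a 2 + a 5 + a 6 + a 7 + a 8 + a 9 + a 10 + a 11 + a 12 + a 13 < 5/12 \<or> a 1 + a 2 + a 5 + a 6 + a 7 + a 8 + a 9 + a 10 + a 11 + a 12 + a 13 > 7/12" using n[of "{1,2,5,6,7,8,9,10,11,12,13}"] by (simp add: add.assoc)
    have c13: "a 1 + a 2 + a 5 + a 6 + a 7 + a 8 + a 9 + a 10 + a 11 + a 12 + a 13 < 5/12" using d13 c12 h m by linarith
    have d14: "a 1 + a 2 + a 5 + a 6 + a 7 + a 8 + a 9 + a 10 + a 11 + a 12 + a 13 + a 14 < 5/12 \<or> a 1 + a 2 + a 5 + a 6 + a 7 + a 8 + a 9 + a 10 + a 11 + a 12 + a 13 + a 14 > 7/12" using n[of "{1,2,5,6,7,8,9,10,11,12,13,14}"] by (simp add: add.assoc)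
    have c14: "a 1 + a 2 + a 5 + a 6 + a 7 + a 8 + a 9 + a 10 + a 11 + a 12 + a 13 + a 14 < 5/12" using d14 c13 h m by linarith
    show False using c14 m S top2 by linarith
  qed
  have cf: "a 1 + a 2 + a 6 + a 7 + a 8 + a 9 + a 10 + a 11 + a 12 + a 13 + a 14 < 5/12 \<or> a 1 + a 2 + a 6 + a 7 + a 8 + a 9 + a 10 + a 11 + a 12 + a 13 + a 14 > 7/12" using n[of "{1,2,6,7,8,9,10,11,12,13,14}"] by (simp add: add.assoc)
  have e: "(\<Sum>i=6..14. a i) = a 6 + a 7 + a 8 + a 9 + a 10 + a 11 + a 12 + a 13 + a 14"
    by (simp add: sum.atLeast_Suc_atMost numeral_eq_Suc)
  show ?thesis using a5 cf e c0' m S by linarith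
qed

end
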